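(* In the setting of the context, assume $\mathbf{A}^{-1}$ exists and $\mathbf{Q}_\Delta$ is given by the LU trick. Then for every $k\in\mathbb{N}$ there exist constants $c>0$, $c'\ge0$ and $\mu^*>0$ such that for all $\mu\ge\mu^*$, $$\Big\|\mathbf{C}\big(\mathbf{I}_{LMN}-\hat{\mathbf{P}}^{-1}\mathbf{C}\big)^k\Big\|\le\mu\Big(c\,\big\|\mathbf{I}_L\otimes(\mathbf{I}_M-\mathbf{Q}_\Delta^{-1}\mathbf{Q})^k\otimes\mathbf{I}_N\big\|+\frac{c'}{\mu}\Big),$$ i.e. the norm is bounded by $\mu\big(c\|\mathbf{I}_L\otimes(\mathbf{I}_M-\mathbf{Q}_\Delta^{-1}\mathbf{Q})^k\otimes\mathbf{I}_N\|+\mathcal{O}(1/\mu)\big)$.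
   Context: Fix positive integers $L,M,N$. $\mathbf{Q}=(q_{m,j})\in\mathbb{R}^{M\times M}$ with $q_{m,j}=\int_0^{\tau_m}\ell_j(s)\,ds$ is the collocation matrix for the (right) Gauss–Radau nodes $0<\tau_1<\dots<\tau_M=1$ on $[0,1]$ ($\ell_j$ Lagrange basis polynomials). LU trick: $\mathbf{Q}^T=\mathbf{L}_Q\mathbf{U}_Q$ with $\mathbf{L}_Q$ unit lower triangular and $\mathbf{U}_Q$ upper triangular, $\mathbf{Q}_\Delta=\mathbf{U}_Q^T$. $\mathbf{A}\in\mathbb{C}^{N\times N}$, $\mu>0$. $\mathbf{N}_M\in\mathbb{R}^{M\times M}$ has ones in its last column and zeros elsewhere, $\mathbf{H}=\mathbf{N}_M\otimes\mathbf{I}_N$, $\mathbf{E}\in\mathbb{R}^{L\times L}$ has ones on the first subdiagonal and zeros elsewhere. $\mathbf{C}=\mathbf{I}_{LMN}-\mu\,\mathbf{I}_L\otimes\mathbf{Q}\otimes\mathbf{A}-\mathbf{E}\otimes\mathbf{H}$, $\hat{\mathbf{P}}=\mathbf{I}_{LMN}-\mu\,\mathbf{I}_L\otimes\mathbf{Q}_\Delta\otimes\mathbf{A}$ (assumed invertible). $\|\cdot\|$ is any induced matrix norm. *)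

theory Defs
  imports "HOL-Analysis.Analysis" "Jordan_Normal_Form.Matrix"
begin

definition kron :: "'a::times mat \<Rightarrow> 'a mat \<Rightarrow> 'a mat" where
  "kron A B = mat (dim_row A * dim_row B) (dim_col A * dim_col B)
     (\<lambda>(i,j). A $$ (i div dim_row B, j div dim_col B) * B $$ (i mod dim_row B, j mod dim_col B))"

(* inverse of an n x n matrix (meaningful when it is invertible) *)
definition inv_mat :: "nat \<Rightarrow> 'a::semiring_1 mat \<Rightarrow> 'a mat" where
  "inv_mat n A = (THE B. B \<in> carrier_mat n n \<and> A * B = 1\<^sub>m n \<and> B * A = 1\<^sub>m n)"

(* Lagrange basis polynomial l_j for nodes tau 0, ..., tau (M-1) (0-based indices) *)
definition lagrange_basis :: "nat \<Rightarrow> (nat \<Rightarrow> real) \<Rightarrow> nat \<Rightarrow> real \<Rightarrow> real" where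
  "lagrange_basis M tau j s = (\<Prod>i\<in>{0..<M}-{j}. (s - tau i) / (tau j - tau i))"

definition right_radau_nodes :: "nat \<Rightarrow> (nat \<Rightarrow> real) \<Rightarrow> bool" where
  "right_radau_nodes M tau \<longleftrightarrow> M \<ge> 1 \<and> 0 < tau 0 \<and> tau (M - 1) = 1 \<and>
     (\<forall>i j. i < j \<and> j < M \<longrightarrow> tau i < tau j) \<and>
     (\<forall>p :: real poly. degree p \<le> 2 * M - 2 \<longrightarrow>
        integral {0..1} (poly p) =
        (\<Sum>j<M. integral {0..1} (lagrange_basis M tau j) * poly p (tau j)))"

definition coll_mat :: "nat \<Rightarrow> (nat \<Rightarrow> real) \<Rightarrow> real mat" where
  "coll_mat M tau = mat M M (\<lambda>(m,j). integral {0..tau m} (lagrange_basis M tau j))"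

definition last_col_ones :: "nat \<Rightarrow> 'a::{zero,one} mat" where
  "last_col_ones M = mat M M (\<lambda>(i,j). if j = M - 1 then 1 else 0)"

definition subdiag_ones :: "nat \<Rightarrow> 'a::{zero,one} mat" where
  "subdiag_ones L = mat L L (\<lambda>(i,j). if i = j + 1 then 1 else 0)"

definition lower_unitri :: "nat \<Rightarrow> 'a::{zero,one} mat \<Rightarrow> bool" where
  "lower_unitri n A \<longleftrightarrow> A \<in> carrier_mat n n \<and> (\<forall>i<n. A $$ (i,i) = 1) \<and>
     (\<forall>i<n. \<forall>j<n. i < j \<longrightarrow> A $$ (i,j) = 0)"

definition upper_tri :: "nat \<Rightarrow> 'a::zero mat \<Rightarrow> bool" where
  "upper_tri n A \<longleftrightarrow> A \<in> carrier_mat n n \<and> (\<forall>i<n. \<forall>j<n. j < i \<longrightarrow> A $$ (i,j) = 0)"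

definition is_vec_norm :: "nat \<Rightarrow> (complex vec \<Rightarrow> real) \<Rightarrow> bool" where
  "is_vec_norm n nv \<longleftrightarrow>
     (\<forall>x\<in>carrier_vec n. nv x \<ge> 0 \<and> (nv x = 0 \<longleftrightarrow> x = 0\<^sub>v n)) \<and>
     (\<forall>x\<in>carrier_vec n. \<forall>a. nv (a \<cdot>\<^sub>v x) = cmod a * nv x) \<and>
     (\<forall>x\<in>carrier_vec n. \<forall>y\<in>carrier_vec n. nv (x + y) \<le> nv x + nv y)"

definition induced_norm :: "nat \<Rightarrow> (complex vec \<Rightarrow> real) \<Rightarrow> complex mat \<Rightarrow> real" where
  "induced_norm n nv B = Sup {nv (B *\<^sub>v x) | x. x \<in> carrier_vec n \<and> nv x = 1}"

definition cmat :: "real mat \<Rightarrow> complex mat" where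
  "cmat B = map_mat complex_of_real B"

end

theory Submission
  imports Defs "Jordan_Normal_Form.Determinant"
begin


context
  fixes n :: nat and nv :: "complex vec \<Rightarrow> real"
  assumes nv: "is_vec_norm n nv"
begin

lemma nv_nonneg: "x \<in> carrier_vec n \<Longrightarrow> nv x \<ge> 0"
  using nv unfolding is_vec_norm_def by blast
lemma nv_zero_iff: "x \<in> carrier_vec n \<Longrightarrow> nv x = 0 \<longleftrightarrow> x = 0\<^sub>v n"
  using nv unfolding is_vec_norm_def by blast
lemma nv_scale: "x \<in> carrier_vec n \<Longrightarrow> nv (a \<cdot>\<^sub>v x) = cmod a * nv x"
  using nv unfolding is_vec_norm_def by blast
lemma nv_tri: "x \<in> carrier_vec n \<Longrightarrow> y \<in> carrier_vec n \<Longrightarrow> nv (x + y) \<le> nv x + nv y"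
  using nv unfolding is_vec_norm_def by blast
lemma nv_uminus: "x \<in> carrier_vec n \<Longrightarrow> nv (- x) = nv x"
proof -
  assume x: "x \<in> carrier_vec n"
  have "- x = (-1) \<cdot>\<^sub>v x" using x by (intro eq_vecI) auto
  then show ?thesis using nv_scale[OF x, of "-1"] by simp
qed
lemma nv_minus: "x \<in> carrier_vec n \<Longrightarrow> y \<in> carrier_vec n \<Longrightarrow> nv (x - y) \<le> nv x + nv y"
proof -
  assume x: "x \<in> carrier_vec n" and y: "y \<in> carrier_vec n"
  have "x - y = x + (- y)" using x y by (intro eq_vecI) auto
  then show ?thesis using nv_tri[OF x, of "-y"] nv_uminus[OF y] y by simp
qed
lemma nv_rev: "x \<in> carrier_vec n \<Longrightarrow> y \<in> carrier_vec n \<Longrightarrow> nv x \<le> nv (x - y) + nv y"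
proof -
  assume x: "x \<in> carrier_vec n" and y: "y \<in> carrier_vec n"
  have "x = (x - y) + y" using x y by (intro eq_vecI) auto
  then show ?thesis using nv_tri[of "x - y" y] x y by (metis minus_carrier_vec)
qed

definition cu where "cu = (\<Sum>i<n. nv (unit_vec n i))"

lemma nv_upper_aux: "x \<in> carrier_vec n \<Longrightarrow> k \<le> n \<Longrightarrow>
   nv (vec n (\<lambda>j. if j < k then x $ j else 0)) \<le> (\<Sum>i<k. cmod (x $ i) * nv (unit_vec n i))"
proof (induction k)
  case 0
  have "vec n (\<lambda>j. if j < 0 then x $ j else 0) = 0\<^sub>v n" by (intro eq_vecI) auto
  then show ?case using nv_zero_iff[of "0\<^sub>v n"] by simp
next
  case (Suc k)
  have eq: "vec n (\<lambda>j. if j < Suc k then x $ j else 0) =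
     vec n (\<lambda>j. if j < k then x $ j else 0) + (x $ k) \<cdot>\<^sub>v unit_vec n k"
    using Suc.prems by (intro eq_vecI) (auto simp: unit_vec_def less_Suc_eq)
  have "nv (vec n (\<lambda>j. if j < Suc k then x $ j else 0)) \<le>
      nv (vec n (\<lambda>j. if j < k then x $ j else 0)) + nv ((x $ k) \<cdot>\<^sub>v unit_vec n k)"
    unfolding eq by (intro nv_tri) auto
  also have "\<dots> \<le> (\<Sum>i<k. cmod (x $ i) * nv (unit_vec n i)) + cmod (x $ k) * nv (unit_vec n k)"
    using Suc by (auto simp: nv_scale)
  finally show ?case by simp
qed

lemma nv_upper: "x \<in> carrier_vec n \<Longrightarrow> nv x \<le> (\<Sum>i<n. cmod (x $ i)) * cu"
proof -
  assume x: "x \<in> carrier_vec n"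
  have "vec n (\<lambda>j. if j < n then x $ j else 0) = x" using x by (intro eq_vecI) auto
  then have "nv x \<le> (\<Sum>i<n. cmod (x $ i) * nv (unit_vec n i))"
    using nv_upper_aux[OF x, of n] by simp
  also have "\<dots> \<le> (\<Sum>i<n. cmod (x $ i) * cu)"
  proof (intro sum_mono mult_left_mono)
    fix i assume "i \<in> {..<n}"
    then show "nv (unit_vec n i) \<le> cu" unfolding cu_def
      by (intro member_le_sum) (auto intro: nv_nonneg)
  qed auto
  finally show ?thesis by (simp add: sum_distrib_right)
qed

lemma cu_nonneg: "cu \<ge> 0" unfolding cu_def by (intro sum_nonneg) (auto intro: nv_nonneg)

lemma nv_pos: "x \<in> carrier_vec n \<Longrightarrow> x \<noteq> 0\<^sub>v n \<Longrightarrow> nv x > 0"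
  using nv_nonneg nv_zero_iff by force

lemma sum_cmod_pos: "x \<in> carrier_vec n \<Longrightarrow> x \<noteq> 0\<^sub>v n \<Longrightarrow> (\<Sum>i<n. cmod (x $ i)) > 0"
proof -
  assume x: "x \<in> carrier_vec n" "x \<noteq> 0\<^sub>v n"
  then obtain i where i: "i < n" "x $ i \<noteq> 0" by (metis eq_vecI index_zero_vec carrier_vecD dim_vec)
  have "cmod (x $ i) \<le> (\<Sum>i<n. cmod (x $ i))" using i by (intro member_le_sum) auto
  moreover have "cmod (x $ i) > 0" using i by simp
  ultimately show ?thesis by linarith
qed

lemma nv_cont: "continuous_on UNIV (\<lambda>f::nat \<Rightarrow> complex. nv (vec n f))"
proof -
  have "isCont (\<lambda>f::nat \<Rightarrow> complex. nv (vec n f)) f" for f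
  proof -
    have ci: "isCont (\<lambda>h::nat \<Rightarrow> complex. h i) f" for i
      by (metis continuous_on_product_coordinates continuous_on_eq_continuous_at open_UNIV UNIV_I)
    have lim: "((\<lambda>h::nat \<Rightarrow> complex. (\<Sum>i<n. cmod (h i - f i)) * cu) \<longlongrightarrow> (\<Sum>i<n. cmod (f i - f i)) * cu) (at f)"
      by (intro tendsto_intros isCont_tendsto_compose[OF ci] tendsto_ident_at)
    have "((\<lambda>h. nv (vec n h) - nv (vec n f)) \<longlongrightarrow> 0) (at f)"
    proof (rule Lim_null_comparison[OF _ lim[simplified]])
      show "\<forall>\<^sub>F h in at f. norm (nv (vec n h) - nv (vec n f)) \<le> (\<Sum>i<n. cmod (h i - f i)) * cu"
      proof (intro always_eventually allI)
        fix h :: "nat \<Rightarrow> complex"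
        have e: "vec n h - vec n f = vec n (\<lambda>i. h i - f i)" by (intro eq_vecI) auto
        have e2: "vec n f - vec n h = vec n (\<lambda>i. - (h i - f i))" by (intro eq_vecI) auto
        have "nv (vec n (\<lambda>i. h i - f i)) \<le> (\<Sum>i<n. cmod (h i - f i)) * cu"
          using nv_upper[of "vec n (\<lambda>i. h i - f i)"] by simp
        moreover have "nv (vec n (\<lambda>i. - (h i - f i))) \<le> (\<Sum>i<n. cmod (h i - f i)) * cu"
          using nv_upper[of "vec n (\<lambda>i. - (h i - f i))"] by (simp add: norm_minus_commute)
        moreover have "nv (vec n h) \<le> nv (vec n h - vec n f) + nv (vec n f)"
          by (intro nv_rev) auto
        moreover have "nv (vec n f) \<le> nv (vec n f - vec n h) + nv (vec n h)"
          by (intro nv_rev) auto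
        ultimately show "norm (nv (vec n h) - nv (vec n f)) \<le> (\<Sum>i<n. cmod (h i - f i)) * cu"
          unfolding e e2 by simp
      qed
    qed
    then show ?thesis unfolding isCont_def by (simp add: LIM_zero_iff)
  qed
  then show ?thesis by (simp add: continuous_on_eq_continuous_at)
qed

lemma nv_lower: "\<exists>c>0. \<forall>x\<in>carrier_vec n. (\<Sum>i<n. cmod (x $ i)) \<le> c * nv x"
proof (cases "n = 0")
  case True
  then show ?thesis by (intro exI[of _ 1]) (auto intro: nv_nonneg)
next
  case False
  define K where "K = (\<lambda>i::nat. if i < n then cball (0::complex) 1 else {0})"
  define S where "S = PiE UNIV K \<inter> {f. (\<Sum>i<n. cmod (f i)) = 1}"
  have cK: "compact (PiE UNIV K)"
  proof -
    have "compactin (product_topology (\<lambda>i. euclidean) UNIV) (PiE UNIV K)"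
      by (subst compactin_PiE) (auto simp: K_def)
    then show ?thesis by (simp add: euclidean_product_topology)
  qed
  have ccl: "closed {f::nat \<Rightarrow> complex. (\<Sum>i<n. cmod (f i)) = 1}"
    by (intro closed_Collect_eq continuous_intros continuous_on_norm
        continuous_on_product_coordinates continuous_on_const)
  have cS: "compact S" unfolding S_def using cK ccl by (rule compact_Int_closed)
  define f0 where "f0 = (\<lambda>i::nat. if i = 0 then (1::complex) else 0)"
  have "(\<Sum>i<n. cmod (f0 i)) = (\<Sum>i<n. if i = 0 then 1 else 0)"
    by (intro sum.cong) (auto simp: f0_def)
  also have "\<dots> = 1" using False by (subst sum.delta) auto
  finally have "f0 \<in> S" unfolding S_def K_def
    using False by (auto simp: PiE_def extensional_def f0_def)
  then have Sne: "S \<noteq> {}" by auto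
  obtain x0 where x0: "x0 \<in> S" and min: "\<And>y. y \<in> S \<Longrightarrow> nv (vec n x0) \<le> nv (vec n y)"
    using continuous_attains_inf[OF cS Sne continuous_on_subset[OF nv_cont]] by blast
  have "vec n x0 \<noteq> 0\<^sub>v n"
  proof
    assume "vec n x0 = 0\<^sub>v n"
    then have "\<forall>i<n. x0 i = 0" by (metis index_vec index_zero_vec(1))
    then have "(\<Sum>i<n. cmod (x0 i)) = 0" by simp
    then show False using x0 unfolding S_def by simp
  qed
  then have m0: "nv (vec n x0) > 0" by (intro nv_pos) auto
  show ?thesis
  proof (intro exI[of _ "1 / nv (vec n x0)"] conjI ballI)
    show "0 < 1 / nv (vec n x0)" using m0 by simp
    fix x :: "complex Matrix.vec" assume x: "x \<in> carrier_vec n"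
    show "(\<Sum>i<n. cmod (x $ i)) \<le> 1 / nv (vec n x0) * nv x"
    proof (cases "x = 0\<^sub>v n")
      case True then show ?thesis using nv_zero_iff[of x] x by simp
    next
      case nz: False
      define s where "s = (\<Sum>i<n. cmod (x $ i))"
      have s: "s > 0" unfolding s_def using sum_cmod_pos[OF x nz] .
      define f where "f = (\<lambda>i. if i < n then x $ i / complex_of_real s else 0)"
      have le: "cmod (x $ i) \<le> s" if "i < n" for i
        unfolding s_def using that by (intro member_le_sum) auto
      have "f \<in> S"
      proof -
        have "f \<in> PiE UNIV K" using le s by (auto simp: f_def K_def norm_divide)
        moreover have "(\<Sum>i<n. cmod (f i)) = 1"
        proof -
          have "(\<Sum>i<n. cmod (f i)) = (\<Sum>i<n. cmod (x $ i) / s)"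
            using s by (intro sum.cong) (auto simp: f_def norm_divide)
          also have "\<dots> = 1" using s by (simp add: s_def sum_divide_distrib[symmetric])
          finally show ?thesis .
        qed
        ultimately show ?thesis unfolding S_def by auto
      qed
      then have "nv (vec n x0) \<le> nv (vec n f)" by (rule min)
      also have "vec n f = complex_of_real (1 / s) \<cdot>\<^sub>v x"
        using x by (intro eq_vecI) (auto simp: f_def field_simps)
      also have "nv \<dots> = nv x / s" using nv_scale[OF x] s by (simp add: norm_divide)
      finally have "nv (vec n x0) * s \<le> nv x" using s by (simp add: field_simps)
      then show ?thesis using m0 s by (simp add: s_def field_simps)
    qed
  qed
qed

lemma op_bound: assumes B: "B \<in> carrier_mat n n"
  shows "\<exists>K\<ge>0. \<forall>x\<in>carrier_vec n. nv (B *\<^sub>v x) \<le> K * nv x"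
proof -
  obtain c where c: "c > 0" "\<And>x. x\<in>carrier_vec n \<Longrightarrow> (\<Sum>i<n. cmod (x $ i)) \<le> c * nv x"
    using nv_lower by blast
  define \<beta> where "\<beta> = (\<Sum>i<n. \<Sum>j<n. cmod (B $$ (i,j)))"
  have b0: "\<beta> \<ge> 0" unfolding \<beta>_def by (intro sum_nonneg) auto
  show ?thesis
  proof (intro exI[of _ "\<beta> * cu * c"] conjI ballI)
    show "0 \<le> \<beta> * cu * c" using b0 cu_nonneg c by simp
    fix x :: "complex Matrix.vec" assume x: "x \<in> carrier_vec n"
    define S where "S = (\<Sum>l<n. cmod (x $ l))"
    have S0: "S \<ge> 0" unfolding S_def by (intro sum_nonneg) auto
    have row: "cmod ((B *\<^sub>v x) $ i) \<le> (\<Sum>j<n. cmod (B $$ (i,j))) * S" if i: "i < n" for i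
    proof -
      have "(B *\<^sub>v x) $ i = (\<Sum>j<n. B $$ (i,j) * x $ j)"
        using B x i by (auto simp: scalar_prod_def atLeast0LessThan)
      also have "cmod \<dots> \<le> (\<Sum>j<n. cmod (B $$ (i,j)) * cmod (x $ j))"
        by (rule order_trans[OF norm_sum]) (simp add: norm_mult)
      also have "\<dots> \<le> (\<Sum>j<n. cmod (B $$ (i,j)) * S)"
        unfolding S_def by (intro sum_mono mult_left_mono member_le_sum) auto
      finally show ?thesis by (simp add: sum_distrib_right)
    qed
    have "nv (B *\<^sub>v x) \<le> (\<Sum>i<n. cmod ((B *\<^sub>v x) $ i)) * cu"
      using B x by (intro nv_upper) auto
    also have "\<dots> \<le> (\<Sum>i<n. (\<Sum>j<n. cmod (B $$ (i,j))) * S) * cu"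
      using cu_nonneg row by (intro mult_right_mono sum_mono) auto
    also have "\<dots> = \<beta> * cu * S" unfolding \<beta>_def by (simp add: sum_distrib_right sum_distrib_left mult_ac)
    also have "\<dots> \<le> \<beta> * cu * (c * nv x)"
      using c(2)[OF x] b0 cu_nonneg unfolding S_def by (intro mult_left_mono) auto
    finally show "nv (B *\<^sub>v x) \<le> \<beta> * cu * c * nv x" by simp
  qed
qed

lemma ind_facts: assumes n: "n > 0" and B: "B \<in> carrier_mat n n"
  shows "induced_norm n nv B \<ge> 0" "\<And>x. x \<in> carrier_vec n \<Longrightarrow> nv (B *\<^sub>v x) \<le> induced_norm n nv B * nv x"
proof -
  define Sset where "Sset = {nv (B *\<^sub>v x) | x. x \<in> carrier_vec n \<and> nv x = 1}"
  have ind: "induced_norm n nv B = Sup Sset" unfolding Sset_def induced_norm_def ..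
  obtain K where K: "\<And>x. x\<in>carrier_vec n \<Longrightarrow> nv (B *\<^sub>v x) \<le> K * nv x" using op_bound[OF B] by blast
  have bdd: "bdd_above Sset" unfolding Sset_def bdd_above_def using K by force
  define e where "e = (unit_vec n 0 :: complex Matrix.vec)"
  have e: "e \<in> carrier_vec n" "e \<noteq> 0\<^sub>v n" using n unfolding e_def
    by (auto simp: unit_vec_def vec_eq_iff)
  have ep: "nv e > 0" using nv_pos[OF e] .
  define e1 where "e1 = complex_of_real (1 / nv e) \<cdot>\<^sub>v e"
  have e1: "e1 \<in> carrier_vec n" "nv e1 = 1" using e ep unfolding e1_def
    by (auto simp: nv_scale norm_divide)
  have ne: "Sset \<noteq> {}" using e1 unfolding Sset_def by blast
  have mem: "nv (B *\<^sub>v x) \<le> induced_norm n nv B" if "x \<in> carrier_vec n" "nv x = 1" for x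
    unfolding ind using that by (intro cSup_upper[OF _ bdd]) (auto simp: Sset_def)
  show "induced_norm n nv B \<ge> 0"
    using mem[OF e1] nv_nonneg[of "B *\<^sub>v e1"] B e1 by force
  fix x :: "complex Matrix.vec" assume x: "x \<in> carrier_vec n"
  show "nv (B *\<^sub>v x) \<le> induced_norm n nv B * nv x"
  proof (cases "x = 0\<^sub>v n")
    case True
    then have "B *\<^sub>v x = 0\<^sub>v n" using B by auto
    then show ?thesis using True nv_zero_iff[of "0\<^sub>v n"] by simp
  next
    case False
    have xp: "nv x > 0" using nv_pos[OF x False] .
    define y where "y = complex_of_real (1 / nv x) \<cdot>\<^sub>v x"
    have y: "y \<in> carrier_vec n" "nv y = 1" using x xp unfolding y_def
      by (auto simp: nv_scale norm_divide)
    have "B *\<^sub>v y = complex_of_real (1 / nv x) \<cdot>\<^sub>v (B *\<^sub>v x)"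
      unfolding y_def using B x by (rule mult_mat_vec)
    then have "nv (B *\<^sub>v y) = nv (B *\<^sub>v x) / nv x"
      using B x xp by (simp add: nv_scale norm_divide)
    with mem[OF y] xp show ?thesis by (simp add: field_simps)
  qed
qed

end


lemma sum_div_mod: "(\<Sum>k<a*b. f (k div b) (k mod b)) = (\<Sum>i<a. \<Sum>j<(b::nat). f i j)"
proof -
  have "(\<Sum>i<a. \<Sum>j<b. f i j) = (\<Sum>p\<in>{..<a}\<times>{..<b}. f (fst p) (snd p))"
    by (simp add: sum.cartesian_product case_prod_beta)
  also have "\<dots> = (\<Sum>k<a*b. f (k div b) (k mod b))"
  proof (rule sum.reindex_bij_witness[of _ "\<lambda>k. (k div b, k mod b)" "\<lambda>p. fst p * b + snd p"])
    fix p assume p: "p \<in> {..<a}\<times>{..<b}"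
    then obtain i j where ij: "p = (i,j)" "i < a" "j < b" by auto
    have "Suc i * b \<le> a * b" using ij by (intro mult_le_mono1) auto
    then show "fst p * b + snd p \<in> {..<a * b}" using ij by auto
    have b0: "b \<noteq> 0" using ij by auto
    have "(j + i * b) div b = i" "(j + i * b) mod b = j" using ij b0 by (simp_all add: div_mult_self1)
    then show "((fst p * b + snd p) div b, (fst p * b + snd p) mod b) = p" using ij by (simp add: add.commute)
  next
    fix k assume k: "k \<in> {..<a*b}"
    then have b: "b > 0" by (cases b) auto
    show "fst (k div b, k mod b) * b + snd (k div b, k mod b) = k" by simp
    show "(k div b, k mod b) \<in> {..<a} \<times> {..<b}" using k b
      by (auto simp: less_mult_imp_div_less)
  qed auto
  finally show ?thesis ..
qed

lemma kron_dims[simp]: "dim_row (kron A B) = dim_row A * dim_row B" "dim_col (kron A B) = dim_col A * dim_col B"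
  unfolding kron_def by auto

lemma kron_carrier[simp]: "A \<in> carrier_mat a1 a2 \<Longrightarrow> B \<in> carrier_mat b1 b2 \<Longrightarrow> kron A B \<in> carrier_mat (a1*b1) (a2*b2)"
  by auto

lemma kron_index: "i < dim_row A * dim_row B \<Longrightarrow> j < dim_col A * dim_col B \<Longrightarrow>
  kron A B $$ (i,j) = A $$ (i div dim_row B, j div dim_col B) * B $$ (i mod dim_row B, j mod dim_col B)"
  unfolding kron_def by auto

lemma kron_mult:
  fixes A B C D :: "'a::comm_semiring_1 mat"
  assumes A: "A \<in> carrier_mat a1 a2" and B: "B \<in> carrier_mat b1 b2"
    and C: "C \<in> carrier_mat a2 a3" and D: "D \<in> carrier_mat b2 b3"
  shows "kron A B * kron C D = kron (A * C) (B * D)"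
proof (rule eq_matI)
  show "dim_row (kron A B * kron C D) = dim_row (kron (A * C) (B * D))" using A B C D by simp
  show "dim_col (kron A B * kron C D) = dim_col (kron (A * C) (B * D))" using A B C D by simp
  fix i j assume "i < dim_row (kron (A * C) (B * D))" "j < dim_col (kron (A * C) (B * D))"
  then have i: "i < a1 * b1" and j: "j < a3 * b3" using A B C D by auto
  have b1: "b1 > 0" using i by (cases b1) auto
  have b3: "b3 > 0" using j by (cases b3) auto
  have "(kron A B * kron C D) $$ (i,j) = (\<Sum>k<a2*b2. kron A B $$ (i,k) * kron C D $$ (k,j))"
    using A B C D i j by (simp add: scalar_prod_def atLeast0LessThan)
  also have "\<dots> = (\<Sum>k<a2*b2. (A $$ (i div b1, k div b2) * C $$ (k div b2, j div b3)) *
       (B $$ (i mod b1, k mod b2) * D $$ (k mod b2, j mod b3)))"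
    using A B C D i j by (intro sum.cong refl) (auto simp: kron_index mult_ac)
  also have "\<dots> = (\<Sum>k1<a2. \<Sum>k2<b2. (A $$ (i div b1, k1) * C $$ (k1, j div b3)) *
       (B $$ (i mod b1, k2) * D $$ (k2, j mod b3)))"
    by (rule sum_div_mod[where f = "\<lambda>k1 k2. (A $$ (i div b1, k1) * C $$ (k1, j div b3)) *
       (B $$ (i mod b1, k2) * D $$ (k2, j mod b3))"])
  also have "\<dots> = (\<Sum>k1<a2. A $$ (i div b1, k1) * C $$ (k1, j div b3)) *
       (\<Sum>k2<b2. B $$ (i mod b1, k2) * D $$ (k2, j mod b3))"
    by (simp add: sum_product)
  also have "\<dots> = kron (A * C) (B * D) $$ (i,j)"
    using A B C D i j b1 b3
    by (simp add: kron_index scalar_prod_def atLeast0LessThan less_mult_imp_div_less)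
  finally show "(kron A B * kron C D) $$ (i,j) = kron (A * C) (B * D) $$ (i,j)" .
qed

lemma kron_one: "kron (1\<^sub>m a) (1\<^sub>m b) = (1\<^sub>m (a*b) :: 'a::semiring_1 mat)"
proof (rule eq_matI)
  fix i j assume "i < dim_row (1\<^sub>m (a*b) :: 'a mat)" "j < dim_col (1\<^sub>m (a*b) :: 'a mat)"
  then have i: "i < a*b" and j: "j < a*b" by auto
  then have b: "b > 0" by (cases b) auto
  have "(i div b = j div b \<and> i mod b = j mod b) \<longleftrightarrow> i = j"
    by (metis div_mult_mod_eq)
  then show "kron (1\<^sub>m a) (1\<^sub>m b) $$ (i, j) = (1\<^sub>m (a*b) :: 'a mat) $$ (i, j)"
    using i j b by (auto simp: kron_index less_mult_imp_div_less)
qed auto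

lemma kron_minus_left:
  fixes A B C :: "'a::ring mat"
  assumes "A \<in> carrier_mat a1 a2" "B \<in> carrier_mat a1 a2"
  shows "kron (A - B) C = kron A C - kron B C"
proof (rule eq_matI)
  fix i j assume "i < dim_row (kron A C - kron B C)" "j < dim_col (kron A C - kron B C)"
  then have i: "i < a1 * dim_row C" and j: "j < a2 * dim_col C" using assms by auto
  have "dim_row C > 0" using i by (cases "dim_row C") auto
  moreover have "dim_col C > 0" using j by (cases "dim_col C") auto
  ultimately show "kron (A - B) C $$ (i, j) = (kron A C - kron B C) $$ (i, j)"
    using assms i j by (auto simp: kron_index less_mult_imp_div_less algebra_simps)
qed (use assms in auto)

lemma kron_minus_right:
  fixes A B C :: "'a::ring mat"
  assumes "B \<in> carrier_mat b1 b2" "C \<in> carrier_mat b1 b2"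
  shows "kron A (B - C) = kron A B - kron A C"
proof (rule eq_matI)
  fix i j assume "i < dim_row (kron A B - kron A C)" "j < dim_col (kron A B - kron A C)"
  then have i: "i < dim_row A * b1" and j: "j < dim_col A * b2" using assms by auto
  have "b1 > 0" using i by (cases b1) auto
  moreover have "b2 > 0" using j by (cases b2) auto
  ultimately show "kron A (B - C) $$ (i, j) = (kron A B - kron A C) $$ (i, j)"
    using assms i j by (auto simp: kron_index algebra_simps)
qed (use assms in auto)

lemma cmat_carrier[simp]: "A \<in> carrier_mat a b \<Longrightarrow> cmat A \<in> carrier_mat a b"
  unfolding cmat_def by auto
lemma cmat_dims[simp]: "dim_row (cmat A) = dim_row A" "dim_col (cmat A) = dim_col A"
  unfolding cmat_def by auto
lemma cmat_mult: "A \<in> carrier_mat a b \<Longrightarrow> B \<in> carrier_mat b c \<Longrightarrow> cmat (A * B) = cmat A * cmat B"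
  unfolding cmat_def by (rule of_real_hom.mat_hom_mult)
lemma cmat_one: "cmat (1\<^sub>m n) = 1\<^sub>m n"
  unfolding cmat_def by (rule of_real_hom.mat_hom_one)
lemma cmat_minus: "A \<in> carrier_mat a b \<Longrightarrow> B \<in> carrier_mat a b \<Longrightarrow> cmat (A - B) = cmat A - cmat B"
  unfolding cmat_def by (intro eq_matI) auto
lemma cmat_pow: "A \<in> carrier_mat n n \<Longrightarrow> cmat (A ^\<^sub>m k) = cmat A ^\<^sub>m k"
  unfolding cmat_def by (rule of_real_hom.mat_hom_pow)



definition lp :: "nat \<Rightarrow> (nat \<Rightarrow> real) \<Rightarrow> nat \<Rightarrow> real poly" where
  "lp M tau j = (\<Prod>i\<in>{0..<M}-{j}. Polynomial.smult (1 / (tau j - tau i)) [:- tau i, 1:])"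

lemma poly_lp: "poly (lp M tau j) = lagrange_basis M tau j"
  unfolding lp_def lagrange_basis_def by (auto simp: poly_prod fun_eq_iff diff_divide_distrib)

lemma degree_lp: assumes "j < M" shows "degree (lp M tau j) \<le> M - 1"
proof -
  have "degree (lp M tau j) \<le> (\<Sum>i\<in>{0..<M}-{j}. degree (Polynomial.smult (1 / (tau j - tau i)) [:- tau i, 1:]))"
    unfolding lp_def by (rule order_trans[OF degree_prod_sum_le]) (auto simp: o_def)
  also have "\<dots> \<le> (\<Sum>i\<in>{0..<M}-{j}. 1)"
    by (intro sum_mono order_trans[OF degree_smult_le]) auto
  also have "\<dots> \<le> M - 1" using \<open>j < M\<close> by (auto simp: card_Diff_singleton)
  finally show ?thesis .
qed

lemma lagrange_delta:
  assumes inj: "inj_on tau {..<M}" and j: "j < M" and m: "m < M"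
  shows "lagrange_basis M tau j (tau m) = (if m = j then 1 else 0)"
proof (cases "m = j")
  case True
  have "tau j - tau i \<noteq> 0" if "i \<in> {0..<M}-{j}" for i
    using inj that j by (auto dest: inj_onD)
  then show ?thesis using True unfolding lagrange_basis_def by (auto intro!: prod.neutral)
next
  case False
  then have "m \<in> {0..<M}-{j}" using m by auto
  then have "(\<Prod>i\<in>{0..<M}-{j}. (tau m - tau i) / (tau j - tau i)) = 0"
    by (intro prod_zero) auto
  then show ?thesis using False unfolding lagrange_basis_def by simp
qed

lemma coll_inj:
  assumes radau: "right_radau_nodes M tau" and v: "v \<in> carrier_vec M"
    and Qv: "coll_mat M tau *\<^sub>v v = 0\<^sub>v M"
  shows "v = 0\<^sub>v M"
proof -
  have M1: "M \<ge> 1" and t0: "0 < tau 0" and mono: "\<And>i j. i < j \<Longrightarrow> j < M \<Longrightarrow> tau i < tau j"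
    using radau unfolding right_radau_nodes_def by auto
  have mono_le: "tau i \<le> tau j" if "i \<le> j" "j < M" for i j
    using mono[of i j] that by (cases "i = j") auto
  have inj: "inj_on tau {..<M}"
  proof (rule inj_onI)
    fix i j assume "i \<in> {..<M}" "j \<in> {..<M}" "tau i = tau j"
    then show "i = j" using mono[of i j] mono[of j i] by (cases i j rule: linorder_cases) auto
  qed
  have tpos: "tau i > 0" if "i < M" for i using mono_le[of 0 i] that t0 by auto
  define PP where "PP = (\<Sum>j<M. Polynomial.smult (v $ j) (lp M tau j))"
  have degPP: "degree PP \<le> M - 1" unfolding PP_def
    by (intro degree_sum_le order_trans[OF degree_smult_le] degree_lp) auto
  have pPP: "poly PP s = (\<Sum>j<M. v $ j * lagrange_basis M tau j s)" for s
    unfolding PP_def by (simp add: poly_sum poly_lp)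
  define F where "F = (\<lambda>t. integral {0..t} (poly PP))"
  have contp: "continuous_on S (poly PP)" for S by (intro continuous_intros)
  have FQ: "F (tau m) = 0" if m: "m < M" for m
  proof -
    have "F (tau m) = (\<Sum>j<M. integral {0..tau m} (\<lambda>s. v $ j * lagrange_basis M tau j s))"
      unfolding F_def pPP
      by (rule Henstock_Kurzweil_Integration.integral_sum)
         (auto intro!: integrable_continuous_interval continuous_intros simp: poly_lp[symmetric])
    also have "\<dots> = (\<Sum>j<M. coll_mat M tau $$ (m,j) * v $ j)"
      using m by (intro sum.cong refl) (auto simp: coll_mat_def)
    also have "\<dots> = (coll_mat M tau *\<^sub>v v) $ m"
      using m v by (auto simp: coll_mat_def scalar_prod_def atLeast0LessThan mult.commute)
    also have "\<dots> = 0" using Qv m by simp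
    finally show ?thesis .
  qed
  have F0: "F 0 = 0" unfolding F_def by simp
  have derF: "(F has_real_derivative poly PP x) (at x)" if "x > 0" for x
  proof -
    have "(F has_real_derivative poly PP x) (at x within {0..x+1})"
      unfolding F_def using that by (intro integral_has_real_derivative contp) auto
    then show ?thesis using that by (simp add: at_within_Icc_at)
  qed
  have contF: "continuous_on {a..b} F" if "0 \<le> a" for a b
  proof -
    have "continuous (at t within {0..b}) F" if "t \<in> {0..b}" for t
      using DERIV_continuous[OF integral_has_real_derivative[OF contp that]] unfolding F_def .
    then have "continuous_on {0..b} F" by (simp add: continuous_on_eq_continuous_within)
    then show ?thesis by (rule continuous_on_subset) (use that in auto)
  qed
  define a where "a = (\<lambda>i. if i = 0 then 0 else tau (i - 1))"
  have ab: "a i < tau i" "0 \<le> a i" "F (a i) = 0" "F (tau i) = 0" if "i < M" for i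
    using that mono[of "i - 1" i] tpos[of "i - 1"] FQ[of i] FQ[of "i-1"] F0 t0 less_imp_diff_less[OF that, of 1]
    by (auto simp: a_def)
  have "\<exists>z. a i < z \<and> z < tau i \<and> poly PP z = 0" if i: "i < M" for i
  proof -
    have "\<exists>z. a i < z \<and> z < tau i \<and> (*) (poly PP z) = (\<lambda>v. 0)"
    proof (rule Rolle_deriv[OF ab(1)[OF i]])
      show "F (a i) = F (tau i)" using ab[OF i] by simp
      show "continuous_on {a i..tau i} F" using ab[OF i] by (intro contF) auto
      fix x assume "a i < x" "x < tau i"
      then have "x > 0" using ab[OF i] by auto
      then show "(F has_derivative (*) (poly PP x)) (at x)"
        using derF has_field_derivative_def by blast
    qed
    then show ?thesis by (metis mult.right_neutral)
  qed
  then obtain z where z: "\<And>i. i < M \<Longrightarrow> a i < z i \<and> z i < tau i \<and> poly PP (z i) = 0" by metis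
  have zmono: "z i < z j" if "i < j" "j < M" for i j
  proof -
    have "z i < tau i" using z[of i] that by auto
    also have "tau i \<le> tau (j - 1)" using that by (intro mono_le) auto
    also have "\<dots> = a j" using that by (auto simp: a_def)
    also have "\<dots> < z j" using z[of j] that by auto
    finally show ?thesis .
  qed
  have injz: "inj_on z {..<M}"
  proof (rule inj_onI)
    fix i j assume "i \<in> {..<M}" "j \<in> {..<M}" "z i = z j"
    then show "i = j" using zmono[of i j] zmono[of j i] by (cases i j rule: linorder_cases) auto
  qed
  have PP0: "PP = 0"
  proof (rule ccontr)
    assume "PP \<noteq> 0"
    have "z ` {..<M} \<subseteq> {x. poly PP x = 0}" using z by auto
    then have "card (z ` {..<M}) \<le> card {x. poly PP x = 0}"
      by (intro card_mono poly_roots_finite \<open>PP \<noteq> 0\<close>)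
    also have "\<dots> \<le> degree PP" by (rule card_poly_roots_bound[OF \<open>PP \<noteq> 0\<close>])
    finally have "M \<le> M - 1" using card_image[OF injz] degPP by simp
    then show False using M1 by simp
  qed
  show ?thesis
  proof (rule eq_vecI)
    fix m assume "m < dim_vec (0\<^sub>v M :: real Matrix.vec)"
    then have m: "m < M" by simp
    have "0 = poly PP (tau m)" using PP0 by simp
    also have "\<dots> = (\<Sum>j<M. v $ j * (if m = j then 1 else 0))"
      unfolding pPP using m by (intro sum.cong refl) (simp add: lagrange_delta[OF inj])
    also have "\<dots> = v $ m" using m by (simp add: if_distrib[of "\<lambda>x. _ * x"] sum.delta cong: if_cong)
    finally show "v $ m = 0\<^sub>v M $ m" using m by simp
  qed (use v in auto)
qed

lemma coll_carrier[simp]: "coll_mat M tau \<in> carrier_mat M M" unfolding coll_mat_def by auto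

lemma Qd_inverse:
  assumes radau: "right_radau_nodes M tau"
    and LU: "lower_unitri M LQ" "upper_tri M UQ" "transpose_mat (coll_mat M tau) = LQ * UQ"
  shows "\<exists>Qi \<in> carrier_mat M M. transpose_mat UQ * Qi = 1\<^sub>m M \<and> Qi * transpose_mat UQ = 1\<^sub>m M"
proof -
  let ?Q = "coll_mat M tau"
  have LQ: "LQ \<in> carrier_mat M M" and UQ: "UQ \<in> carrier_mat M M"
    using LU unfolding lower_unitri_def upper_tri_def by auto
  have "det ?Q \<noteq> 0"
  proof
    assume "det ?Q = 0"
    then obtain v where "v \<in> carrier_vec M" "v \<noteq> 0\<^sub>v M" "?Q *\<^sub>v v = 0\<^sub>v M"
      using det_0_iff_vec_prod_zero[OF coll_carrier] by blast
    then show False using coll_inj[OF radau] by blast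
  qed
  moreover have "det ?Q = det (transpose_mat ?Q)" by (rule det_transpose[OF coll_carrier, symmetric])
  moreover have "det (transpose_mat ?Q) = det LQ * det UQ" using LU(3) LQ UQ by (simp add: det_mult)
  moreover have "det LQ = 1"
  proof -
    have "det LQ = prod_list (diag_mat LQ)"
      using LU(1) LQ unfolding lower_unitri_def by (intro det_lower_triangular) auto
    also have "\<dots> = 1" using LU(1) LQ unfolding lower_unitri_def prod_list_diag_prod by auto
    finally show ?thesis .
  qed
  ultimately have "det (transpose_mat UQ) \<noteq> 0" using UQ by (simp add: det_transpose)
  then have "transpose_mat UQ \<in> Units (ring_mat TYPE(real) M ())"
    using UQ by (intro det_non_zero_imp_unit) auto
  then show ?thesis unfolding Units_def by (auto simp: ring_mat_simps)
qed



lemma inv_mat_eq: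
  assumes A: "A \<in> carrier_mat n n" and X: "X \<in> carrier_mat n n"
    and AX: "A * X = 1\<^sub>m n" and XA: "X * A = 1\<^sub>m n"
  shows "inv_mat n A = X"
  unfolding inv_mat_def
proof (rule the_equality)
  show "X \<in> carrier_mat n n \<and> A * X = 1\<^sub>m n \<and> X * A = 1\<^sub>m n" using assms by auto
  fix Y assume Y: "Y \<in> carrier_mat n n \<and> A * Y = 1\<^sub>m n \<and> Y * A = 1\<^sub>m n"
  have "Y = Y * (A * X)" using Y AX by (metis right_mult_one_mat)
  also have "\<dots> = (Y * A) * X" using assoc_mult_mat[of Y n n A n X n] Y A X by auto
  also have "\<dots> = X" using Y X by simp
  finally show "Y = X" .
qed

lemma invertible_obtain:
  assumes "invertible_mat P" "P \<in> carrier_mat n n"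
  shows "\<exists>X\<in>carrier_mat n n. P * X = 1\<^sub>m n \<and> X * P = 1\<^sub>m n"
proof -
  obtain B where B: "P * B = 1\<^sub>m (dim_row P)" "B * P = 1\<^sub>m (dim_row B)"
    using assms unfolding invertible_mat_def inverts_mat_def by blast
  have "dim_col B = n" using arg_cong[OF B(1), of dim_col] assms by simp
  moreover have "dim_row B = n" using arg_cong[OF B(2), of dim_col] assms by simp
  ultimately show ?thesis using B assms by (intro bexI[of _ B]) auto
qed

lemma smult_mat_vec: "G \<in> carrier_mat n m \<Longrightarrow> z \<in> carrier_vec m \<Longrightarrow>
   ((a::'a::comm_ring) \<cdot>\<^sub>m G) *\<^sub>v z = a \<cdot>\<^sub>v (G *\<^sub>v z)"
  by (intro eq_vecI) (auto simp: scalar_prod_def sum_distrib_left mult_ac)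

lemma pert_pow:
  assumes nv: "is_vec_norm n nv" and n: "n > 0" and T0: "T0 \<in> carrier_mat n n" and r: "r \<ge> 0"
  shows "\<exists>K\<ge>0. \<forall>T (\<mu>::real). T \<in> carrier_mat n n \<longrightarrow> \<mu> \<ge> 1 \<longrightarrow>
     (\<forall>x\<in>carrier_vec n. nv (T *\<^sub>v x - T0 *\<^sub>v x) \<le> r / \<mu> * nv x) \<longrightarrow>
     (\<forall>x\<in>carrier_vec n. nv ((T ^\<^sub>m k) *\<^sub>v x - (T0 ^\<^sub>m k) *\<^sub>v x) \<le> K / \<mu> * nv x)"
proof (induction k)
  case 0
  show ?case
  proof (intro exI[of _ 0] conjI allI impI ballI)
    fix T :: "complex mat" and x :: "complex Matrix.vec" and \<mu> :: real assume T: "T \<in> carrier_mat n n" and x: "x \<in> carrier_vec n"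
    have "(T ^\<^sub>m 0) *\<^sub>v x - (T0 ^\<^sub>m 0) *\<^sub>v x = 0\<^sub>v n" using T T0 x by auto
    then show "nv ((T ^\<^sub>m 0) *\<^sub>v x - (T0 ^\<^sub>m 0) *\<^sub>v x) \<le> 0 / \<mu> * nv x"
      using nv_zero_iff[OF nv, of "0\<^sub>v n"] by simp
  qed simp
next
  case (Suc k)
  then obtain K where K0: "K \<ge> 0" and K: "\<And>(T::complex mat) \<mu>. T \<in> carrier_mat n n \<Longrightarrow> \<mu> \<ge> 1 \<Longrightarrow>
     (\<forall>x\<in>carrier_vec n. nv (T *\<^sub>v x - T0 *\<^sub>v x) \<le> r / \<mu> * nv x) \<Longrightarrow>
     (\<forall>x\<in>carrier_vec n. nv ((T ^\<^sub>m k) *\<^sub>v x - (T0 ^\<^sub>m k) *\<^sub>v x) \<le> K / \<mu> * nv x)" by blast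
  define t where "t = induced_norm n nv T0"
  define tk where "tk = induced_norm n nv (T0 ^\<^sub>m k)"
  have t: "t \<ge> 0" "\<And>x. x \<in> carrier_vec n \<Longrightarrow> nv (T0 *\<^sub>v x) \<le> t * nv x"
    unfolding t_def using ind_facts[OF nv n T0] by auto
  have tk: "tk \<ge> 0" "\<And>x. x \<in> carrier_vec n \<Longrightarrow> nv ((T0 ^\<^sub>m k) *\<^sub>v x) \<le> tk * nv x"
    unfolding tk_def using ind_facts[OF nv n pow_carrier_mat[OF T0]] by auto
  show ?case
  proof (intro exI[of _ "K * (t + r) + tk * r"] conjI allI impI ballI)
    show "0 \<le> K * (t + r) + tk * r" using K0 t tk r by simp
    fix T :: "complex mat" and x :: "complex Matrix.vec" and \<mu> :: real assume T: "T \<in> carrier_mat n n" and mu: "\<mu> \<ge> 1"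
      and hT: "\<forall>x\<in>carrier_vec n. nv (T *\<^sub>v x - T0 *\<^sub>v x) \<le> r / \<mu> * nv x"
      and x: "x \<in> carrier_vec n"
    note Kk = K[OF T mu hT]
    define y where "y = T *\<^sub>v x"
    define y0 where "y0 = T0 *\<^sub>v x"
    have y: "y \<in> carrier_vec n" "y0 \<in> carrier_vec n" using T T0 x by (auto simp: y_def y0_def)
    have nx: "nv x \<ge> 0" using nv_nonneg[OF nv x] .
    have dy: "nv (y - y0) \<le> r / \<mu> * nv x" using hT x unfolding y_def y0_def by blast
    have rmu: "r / \<mu> \<le> r" using mu r by (simp add: divide_le_eq mult_le_cancel_left1)
    have ny: "nv y \<le> (t + r) * nv x"
    proof -
      have "nv y \<le> nv (y - y0) + nv y0" using nv_rev[OF nv y] .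
      also have "\<dots> \<le> r / \<mu> * nv x + t * nv x"
        using dy t(2)[OF x] unfolding y0_def by linarith
      also have "\<dots> \<le> r * nv x + t * nv x" using rmu nx by (intro add_right_mono mult_right_mono)
      finally show ?thesis by (simp add: algebra_simps)
    qed
    have eq: "(T ^\<^sub>m Suc k) *\<^sub>v x - (T0 ^\<^sub>m Suc k) *\<^sub>v x =
       ((T ^\<^sub>m k) *\<^sub>v y - (T0 ^\<^sub>m k) *\<^sub>v y) + (T0 ^\<^sub>m k) *\<^sub>v (y - y0)"
    proof -
      have "(T ^\<^sub>m Suc k) *\<^sub>v x = (T ^\<^sub>m k) *\<^sub>v y" using T x by (simp add: y_def assoc_mult_mat_vec[OF pow_carrier_mat[OF T] T x])
      moreover have "(T0 ^\<^sub>m Suc k) *\<^sub>v x = (T0 ^\<^sub>m k) *\<^sub>v y0" using T0 x by (simp add: y0_def assoc_mult_mat_vec[OF pow_carrier_mat[OF T0] T0 x])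
      moreover have "(T0 ^\<^sub>m k) *\<^sub>v (y - y0) = (T0 ^\<^sub>m k) *\<^sub>v y - (T0 ^\<^sub>m k) *\<^sub>v y0"
        using T0 y by (intro mult_minus_distrib_mat_vec) auto
      ultimately show ?thesis using T T0 y by (intro eq_vecI) auto
    qed
    have "nv ((T ^\<^sub>m Suc k) *\<^sub>v x - (T0 ^\<^sub>m Suc k) *\<^sub>v x)
       \<le> nv ((T ^\<^sub>m k) *\<^sub>v y - (T0 ^\<^sub>m k) *\<^sub>v y) + nv ((T0 ^\<^sub>m k) *\<^sub>v (y - y0))"
      unfolding eq using pow_carrier_mat[OF T, of k] pow_carrier_mat[OF T0, of k] y
      by (intro nv_tri[OF nv] minus_carrier_vec mult_mat_vec_carrier)
    also have "\<dots> \<le> K / \<mu> * nv y + tk * nv (y - y0)"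
      using Kk y tk(2)[of "y - y0"] by (intro add_mono) auto
    also have "\<dots> \<le> K / \<mu> * ((t + r) * nv x) + tk * (r / \<mu> * nv x)"
      using ny dy K0 mu tk(1) by (intro add_mono mult_left_mono) auto
    also have "\<dots> = (K * (t + r) + tk * r) / \<mu> * nv x" using mu by (simp add: field_simps)
    finally show "nv ((T ^\<^sub>m Suc k) *\<^sub>v x - (T0 ^\<^sub>m Suc k) *\<^sub>v x) \<le> (K * (t + r) + tk * r) / \<mu> * nv x" .
  qed
qed

lemma ind_le:
  assumes nv: "is_vec_norm n nv" and n: "n > 0"
    and b: "\<And>x. x \<in> carrier_vec n \<Longrightarrow> nv x = 1 \<Longrightarrow> nv (B *\<^sub>v x) \<le> b"
  shows "induced_norm n nv B \<le> b"
  unfolding induced_norm_def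
proof (rule cSup_least)
  define e where "e = (unit_vec n 0 :: complex Matrix.vec)"
  have e: "e \<in> carrier_vec n" "e \<noteq> 0\<^sub>v n" using n unfolding e_def
    by (auto simp: unit_vec_def vec_eq_iff)
  have ep: "nv e > 0" using nv_pos[OF nv e] .
  define e1 where "e1 = complex_of_real (1 / nv e) \<cdot>\<^sub>v e"
  have e1: "e1 \<in> carrier_vec n" "nv e1 = 1" using e ep unfolding e1_def
    by (auto simp: nv_scale[OF nv] norm_divide)
  then show "{nv (B *\<^sub>v x) |x. x \<in> carrier_vec n \<and> nv x = 1} \<noteq> {}" by blast
qed (use b in auto)



lemma kron_pow:
  assumes R: "R \<in> carrier_mat M M" and L: "L > 0" "M > 0" "N > 0"
  shows "kron (1\<^sub>m L) (kron (cmat R) (1\<^sub>m N)) ^\<^sub>m j = kron (1\<^sub>m L) (kron (cmat (R ^\<^sub>m j)) (1\<^sub>m N))"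
proof (induction j)
  case 0
  have "kron (1\<^sub>m L) (kron (cmat (R ^\<^sub>m 0)) (1\<^sub>m N)) = (1\<^sub>m (L*(M*N)) :: complex mat)"
    using R by (simp add: cmat_one kron_one)
  then show ?case using R by simp
next
  case (Suc j)
  have "kron (1\<^sub>m L) (kron (cmat R) (1\<^sub>m N)) ^\<^sub>m Suc j =
     kron (1\<^sub>m L) (kron (cmat (R ^\<^sub>m j)) (1\<^sub>m N)) * kron (1\<^sub>m L) (kron (cmat R) (1\<^sub>m N))"
    using Suc by simp
  also have "\<dots> = kron (1\<^sub>m L * 1\<^sub>m L) (kron (cmat (R ^\<^sub>m j)) (1\<^sub>m N) * kron (cmat R) (1\<^sub>m N))"
    using R by (intro kron_mult[of _ L L _ "M*N" "M*N" _ L _ "M*N"]) auto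
  also have "kron (cmat (R ^\<^sub>m j)) (1\<^sub>m N) * kron (cmat R) (1\<^sub>m N) =
      kron (cmat (R ^\<^sub>m j) * cmat R) (1\<^sub>m N * (1\<^sub>m N :: complex mat))"
    using R by (intro kron_mult[of _ M M _ N N _ M _ N]) auto
  also have "cmat (R ^\<^sub>m j) * cmat R = cmat (R ^\<^sub>m Suc j)"
    using R by (simp add: cmat_mult[of _ M M _ M])
  finally show ?case by simp
qed

theorem lemma4:
  fixes L M N :: nat and tau :: "nat \<Rightarrow> real" and A :: "complex mat"
    and LQ UQ :: "real mat" and nv :: "complex vec \<Rightarrow> real"
  assumes "L > 0" "M > 0" "N > 0"
    and radau: "right_radau_nodes M tau"
    and A: "A \<in> carrier_mat N N" "invertible_mat A"
    and LU: "lower_unitri M LQ" "upper_tri M UQ" "transpose_mat (coll_mat M tau) = LQ * UQ"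
    and nv: "is_vec_norm (L*M*N) nv"
  shows "\<forall>k::nat. \<exists>c>0. \<exists>c'\<ge>0. \<exists>\<mu>s>0. \<forall>\<mu>::real. \<mu> \<ge> \<mu>s \<longrightarrow>
    (let Q = coll_mat M tau; Q\<Delta> = transpose_mat UQ;
         C = 1\<^sub>m (L*M*N) - complex_of_real \<mu> \<cdot>\<^sub>m kron (1\<^sub>m L) (kron (cmat Q) A)
             - kron (subdiag_ones L) (kron (last_col_ones M) (1\<^sub>m N));
         P = 1\<^sub>m (L*M*N) - complex_of_real \<mu> \<cdot>\<^sub>m kron (1\<^sub>m L) (kron (cmat Q\<Delta>) A)
     in invertible_mat P \<longrightarrow>
        induced_norm (L*M*N) nv (C * (1\<^sub>m (L*M*N) - inv_mat (L*M*N) P * C) ^\<^sub>m k)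
        \<le> \<mu> * (c * induced_norm (L*M*N) nv
                 (kron (1\<^sub>m L) (kron (cmat ((1\<^sub>m M - inv_mat M Q\<Delta> * Q) ^\<^sub>m k)) (1\<^sub>m N)))
               + c' / \<mu>))"
proof (intro allI)
  fix k :: nat
  note LMN = assms(1-3)
  define n where "n = L*M*N"
  have n0: "n > 0" using LMN by (simp add: n_def)
  have nMN: "L*(M*N) = n" by (simp add: n_def)
  have nv': "is_vec_norm n nv" using nv by (simp add: n_def)
  define Q where "Q = coll_mat M tau"
  define Qd where "Qd = transpose_mat UQ"
  have Q: "Q \<in> carrier_mat M M" unfolding Q_def by simp
  have UQ: "UQ \<in> carrier_mat M M" using LU(2) unfolding upper_tri_def by auto
  have Qd: "Qd \<in> carrier_mat M M" unfolding Qd_def using UQ by simp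
  obtain Qi where Qi: "Qi \<in> carrier_mat M M" "Qd * Qi = 1\<^sub>m M" "Qi * Qd = 1\<^sub>m M"
    using Qd_inverse[OF radau LU] unfolding Qd_def by blast
  have invQd: "inv_mat M Qd = Qi" using inv_mat_eq[OF Qd Qi] .
  obtain Ai where Ai: "Ai \<in> carrier_mat N N" "A * Ai = 1\<^sub>m N" "Ai * A = 1\<^sub>m N"
    using invertible_obtain[OF A(2) A(1)] by blast
  define R where "R = 1\<^sub>m M - Qi * Q"
  have R: "R \<in> carrier_mat M M" unfolding R_def using Qi Q by auto
  define Gm where "Gm = kron (1\<^sub>m L) (kron (cmat Q) A)"
  define Bm where "Bm = kron (1\<^sub>m L) (kron (cmat Qd) A)"
  define Fm :: "complex mat" where "Fm = kron (subdiag_ones L) (kron (last_col_ones M) (1\<^sub>m N))"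
  define T0 where "T0 = kron (1\<^sub>m L) (kron (cmat R) (1\<^sub>m N))"
  define Bi where "Bi = kron (1\<^sub>m L) (kron (cmat Qi) Ai)"
  define Xm where "Xm = kron (1\<^sub>m L) (kron (cmat (R ^\<^sub>m k)) (1\<^sub>m N))"
  have cG: "Gm \<in> carrier_mat n n" unfolding Gm_def nMN[symmetric] using Q A by auto
  have cB: "Bm \<in> carrier_mat n n" unfolding Bm_def nMN[symmetric] using Qd A by auto
  have cF: "Fm \<in> carrier_mat n n" unfolding Fm_def nMN[symmetric]
    by (intro kron_carrier) (auto simp: subdiag_ones_def last_col_ones_def)
  have cT0: "T0 \<in> carrier_mat n n" unfolding T0_def nMN[symmetric] using R by auto
  have cBi: "Bi \<in> carrier_mat n n" unfolding Bi_def nMN[symmetric] using Qi Ai by auto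
  have T0k: "T0 ^\<^sub>m k = Xm" unfolding T0_def Xm_def using kron_pow[OF R LMN] .
  have BiBm: "Bi * Bm = 1\<^sub>m n"
  proof -
    have "Bi * Bm = kron (1\<^sub>m L * 1\<^sub>m L) (kron (cmat Qi) Ai * kron (cmat Qd) A)"
      unfolding Bi_def Bm_def using Qi Qd Ai A
      by (intro kron_mult[of _ L L _ "M*N" "M*N" _ L _ "M*N"]) auto
    also have "kron (cmat Qi) Ai * kron (cmat Qd) A = kron (cmat Qi * cmat Qd) (Ai * A)"
      using Qi Qd Ai A by (intro kron_mult[of _ M M _ N N _ M _ N]) auto
    also have "cmat Qi * cmat Qd = 1\<^sub>m M"
      using Qi Qd by (simp add: cmat_mult[symmetric, of _ M M _ M] cmat_one)
    finally show ?thesis using Ai by (simp add: kron_one nMN)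
  qed
  have BmT0: "Bm * T0 = Bm - Gm"
  proof -
    have "Bm * T0 = kron (1\<^sub>m L * 1\<^sub>m L) (kron (cmat Qd) A * kron (cmat R) (1\<^sub>m N))"
      unfolding T0_def Bm_def using R Qd A
      by (intro kron_mult[of _ L L _ "M*N" "M*N" _ L _ "M*N"]) auto
    also have "kron (cmat Qd) A * kron (cmat R) (1\<^sub>m N) = kron (cmat Qd * cmat R) (A * 1\<^sub>m N)"
      using R Qd A by (intro kron_mult[of _ M M _ N N _ M _ N]) auto
    also have "cmat Qd * cmat R = cmat Qd - cmat Q"
    proof -
      have "Qd * R = Qd - Qd * (Qi * Q)" unfolding R_def using Qd Qi Q
        by (simp add: mult_minus_distrib_mat[OF Qd one_carrier_mat mult_carrier_mat[OF Qi(1) Q]])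
      also have "Qd * (Qi * Q) = Q" using Qd Qi Q
        by (simp add: assoc_mult_mat[symmetric, of _ M M _ M _ M])
      finally show ?thesis using Qd R Q by (simp add: cmat_mult[symmetric, of _ M M _ M] cmat_minus[of _ M M])
    qed
    also have "A * 1\<^sub>m N = A" using A by simp
    also have "kron (cmat Qd - cmat Q) A = kron (cmat Qd) A - kron (cmat Q) A"
      using Qd Q by (intro kron_minus_left[of _ M M]) auto
    also have "kron (1\<^sub>m L * 1\<^sub>m L) (kron (cmat Qd) A - kron (cmat Q) A) = Bm - Gm"
      unfolding Bm_def Gm_def using Qd Q A by (simp add: kron_minus_right[of _ "M*N" "M*N"])
    finally show ?thesis .
  qed
  obtain Kb where Kb: "Kb \<ge> 0" "\<And>y. y \<in> carrier_vec n \<Longrightarrow> nv (Bi *\<^sub>v y) \<le> Kb * nv y"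
    using op_bound[OF nv' cBi] by blast
  define \<beta> where "\<beta> = Kb + 1"
  have b0: "\<beta> > 0" using Kb by (simp add: \<beta>_def)
  have Bbound: "nv y \<le> \<beta> * nv (Bm *\<^sub>v y)" if y: "y \<in> carrier_vec n" for y
  proof -
    have "y = Bi *\<^sub>v (Bm *\<^sub>v y)" using y cB cBi BiBm
      by (metis assoc_mult_mat_vec one_mult_mat_vec)
    then have "nv y \<le> Kb * nv (Bm *\<^sub>v y)" using Kb(2)[of "Bm *\<^sub>v y"] cB y by simp
    also have "\<dots> \<le> \<beta> * nv (Bm *\<^sub>v y)" unfolding \<beta>_def
      using nv_nonneg[OF nv', of "Bm *\<^sub>v y"] cB y by (simp add: algebra_simps)
    finally show ?thesis .
  qed
  obtain \<gamma> where \<gamma>: "\<gamma> \<ge> 0" "\<And>y. y \<in> carrier_vec n \<Longrightarrow> nv (Gm *\<^sub>v y) \<le> \<gamma> * nv y"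
    using op_bound[OF nv' cG] by blast
  obtain Kf where Kf: "Kf \<ge> 0" "\<And>y. y \<in> carrier_vec n \<Longrightarrow> nv ((1\<^sub>m n - Fm) *\<^sub>v y) \<le> Kf * nv y"
    using op_bound[OF nv', of "1\<^sub>m n - Fm"] cF by (metis minus_carrier_mat one_carrier_mat)
  obtain \<phi> where \<phi>: "\<phi> \<ge> 0" "\<And>y. y \<in> carrier_vec n \<Longrightarrow> nv ((Fm - T0) *\<^sub>v y) \<le> \<phi> * nv y"
    using op_bound[OF nv', of "Fm - T0"] cF cT0 by (metis minus_carrier_mat)
  define r where "r = 2 * \<beta> * \<phi>"
  have r0: "r \<ge> 0" using b0 \<phi> by (simp add: r_def)
  obtain K where K0: "K \<ge> 0" and K: "\<And>T \<mu>. T \<in> carrier_mat n n \<Longrightarrow> \<mu> \<ge> 1 \<Longrightarrow>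
     (\<forall>x\<in>carrier_vec n. nv (T *\<^sub>v x - T0 *\<^sub>v x) \<le> r / \<mu> * nv x) \<Longrightarrow>
     (\<forall>x\<in>carrier_vec n. nv ((T ^\<^sub>m k) *\<^sub>v x - (T0 ^\<^sub>m k) *\<^sub>v x) \<le> K / \<mu> * nv x)"
    using pert_pow[OF nv' n0 cT0 r0, of k] by blast
  define X where "X = induced_norm n nv Xm"
  have cXm: "Xm \<in> carrier_mat n n" using T0k cT0 by (metis pow_carrier_mat)
  have X: "X \<ge> 0" "\<And>y. y \<in> carrier_vec n \<Longrightarrow> nv (Xm *\<^sub>v y) \<le> X * nv y"
    unfolding X_def using ind_facts[OF nv' n0 cXm] by auto
  define c' where "c' = Kf * X + \<gamma> * K + Kf * K"
  have main: "\<forall>\<mu>::real. \<mu> \<ge> max 1 (2 * \<beta>) \<longrightarrow>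
     invertible_mat (1\<^sub>m n - complex_of_real \<mu> \<cdot>\<^sub>m Bm) \<longrightarrow>
     induced_norm n nv ((1\<^sub>m n - complex_of_real \<mu> \<cdot>\<^sub>m Gm - Fm) *
        (1\<^sub>m n - inv_mat n (1\<^sub>m n - complex_of_real \<mu> \<cdot>\<^sub>m Bm) * (1\<^sub>m n - complex_of_real \<mu> \<cdot>\<^sub>m Gm - Fm)) ^\<^sub>m k)
     \<le> \<mu> * ((\<gamma> + 1) * X + c' / \<mu>)"
  proof (intro allI impI)
    fix \<mu> :: real
    assume mu: "\<mu> \<ge> max 1 (2 * \<beta>)"
    define Pm where "Pm = 1\<^sub>m n - complex_of_real \<mu> \<cdot>\<^sub>m Bm"
    define Cm where "Cm = 1\<^sub>m n - complex_of_real \<mu> \<cdot>\<^sub>m Gm - Fm"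
    assume invP: "invertible_mat (1\<^sub>m n - complex_of_real \<mu> \<cdot>\<^sub>m Bm)"
    have cP: "Pm \<in> carrier_mat n n" unfolding Pm_def using cB by auto
    have cC: "Cm \<in> carrier_mat n n" unfolding Cm_def using cG cF by auto
    obtain Pi where Pi: "Pi \<in> carrier_mat n n" "Pm * Pi = 1\<^sub>m n" "Pi * Pm = 1\<^sub>m n"
      using invertible_obtain[OF invP[folded Pm_def] cP] by blast
    have invPm: "inv_mat n Pm = Pi" using inv_mat_eq[OF cP Pi] .
    define T where "T = 1\<^sub>m n - Pi * Cm"
    have cT: "T \<in> carrier_mat n n" unfolding T_def using Pi cC by auto
    have mu1: "\<mu> \<ge> 1" and mub: "\<mu> \<ge> 2 * \<beta>" using mu by auto
    have mupos: "\<mu> > 0" using mu1 by simp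
    have Pz: "Pm *\<^sub>v z = z - complex_of_real \<mu> \<cdot>\<^sub>v (Bm *\<^sub>v z)" if z: "z \<in> carrier_vec n" for z
      unfolding Pm_def using cB z
      by (simp add: minus_mult_distrib_mat_vec[of _ n n] smult_mat_vec[of _ n n])
    have Cz: "Cm *\<^sub>v z = z - complex_of_real \<mu> \<cdot>\<^sub>v (Gm *\<^sub>v z) - Fm *\<^sub>v z" if z: "z \<in> carrier_vec n" for z
      unfolding Cm_def using cG cF z
      by (simp add: minus_mult_distrib_mat_vec[OF minus_carrier_mat[OF smult_carrier_mat[OF cG]] cF z]
          minus_mult_distrib_mat_vec[OF one_carrier_mat smult_carrier_mat[OF cG] z] smult_mat_vec[OF cG z])
    have Pinv: "nv (Pi *\<^sub>v y) \<le> 2 * \<beta> / \<mu> * nv y" if y: "y \<in> carrier_vec n" for y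
    proof -
      define z where "z = Pi *\<^sub>v y"
      have z: "z \<in> carrier_vec n" unfolding z_def using Pi y by auto
      have Pzy: "Pm *\<^sub>v z = y" unfolding z_def using Pi cP y
        by (metis assoc_mult_mat_vec one_mult_mat_vec)
      have "complex_of_real \<mu> \<cdot>\<^sub>v (Bm *\<^sub>v z) = z - Pm *\<^sub>v z"
        using Pz[OF z] z cB by (intro eq_vecI) auto
      then have "\<mu> * nv (Bm *\<^sub>v z) \<le> nv z + nv y"
        using nv_scale[OF nv', of "Bm *\<^sub>v z" "complex_of_real \<mu>"] nv_minus[OF nv' z, of "Pm *\<^sub>v z"]
          cB z cP mupos Pzy by auto
      moreover have "nv z \<le> \<beta> * nv (Bm *\<^sub>v z)" using Bbound[OF z] .
      ultimately have "\<mu> * nv z \<le> \<beta> * (nv z + nv y)"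
        using b0 mupos by (smt (verit, best) mult_left_mono mult.left_commute mult_le_cancel_left_pos)
      then have "(\<mu> - \<beta>) * nv z \<le> \<beta> * nv y" by (simp add: algebra_simps)
      moreover have "\<mu> / 2 * nv z \<le> (\<mu> - \<beta>) * nv z"
        using mub nv_nonneg[OF nv' z] by (intro mult_right_mono) auto
      ultimately have "\<mu> / 2 * nv z \<le> \<beta> * nv y" by linarith
      then show ?thesis using mupos unfolding z_def by (simp add: field_simps)
    qed
    have Tclose: "\<forall>x\<in>carrier_vec n. nv (T *\<^sub>v x - T0 *\<^sub>v x) \<le> r / \<mu> * nv x"
    proof
      fix x :: "complex Matrix.vec" assume x: "x \<in> carrier_vec n"
      define w where "w = x - T0 *\<^sub>v x"
      have w: "w \<in> carrier_vec n" unfolding w_def using x cT0 by auto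
      have Tx: "T *\<^sub>v x = x - Pi *\<^sub>v (Cm *\<^sub>v x)" unfolding T_def using x Pi cC
        by (simp add: minus_mult_distrib_mat_vec[of _ n n])
      have BT0: "Bm *\<^sub>v (T0 *\<^sub>v x) = Bm *\<^sub>v x - Gm *\<^sub>v x"
        using x cB cT0 cG BmT0
        by (metis assoc_mult_mat_vec minus_mult_distrib_mat_vec)
      have Bw: "Bm *\<^sub>v w = Bm *\<^sub>v x - Bm *\<^sub>v (T0 *\<^sub>v x)" unfolding w_def
        using x cB cT0 by (simp add: mult_minus_distrib_mat_vec[of _ n n])
      have key: "Pm *\<^sub>v w - Cm *\<^sub>v x = (Fm - T0) *\<^sub>v x"
        unfolding Pz[OF w] Cz[OF x] Bw BT0 using x cF cT0 cB cG
        by (intro eq_vecI) (auto simp: w_def minus_mult_distrib_mat_vec[of _ n n] algebra_simps)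
      have Pw: "Pi *\<^sub>v (Pm *\<^sub>v w) = w" using Pi cP w by (metis assoc_mult_mat_vec one_mult_mat_vec)
      have "T *\<^sub>v x - T0 *\<^sub>v x = Pi *\<^sub>v (Pm *\<^sub>v w) - Pi *\<^sub>v (Cm *\<^sub>v x)"
        unfolding Pw Tx using x cT0 Pi cC by (intro eq_vecI) (auto simp: w_def)
      also have "\<dots> = Pi *\<^sub>v (Pm *\<^sub>v w - Cm *\<^sub>v x)"
        using Pi cP cC w x by (simp add: mult_minus_distrib_mat_vec[of _ n n])
      also have "\<dots> = Pi *\<^sub>v ((Fm - T0) *\<^sub>v x)" unfolding key ..
      finally have eq: "T *\<^sub>v x - T0 *\<^sub>v x = Pi *\<^sub>v ((Fm - T0) *\<^sub>v x)" .
      have "nv (Pi *\<^sub>v ((Fm - T0) *\<^sub>v x)) \<le> 2 * \<beta> / \<mu> * nv ((Fm - T0) *\<^sub>v x)"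
        using mult_mat_vec_carrier[OF minus_carrier_mat[OF cT0] x] by (intro Pinv)
      also have "\<dots> \<le> 2 * \<beta> / \<mu> * (\<phi> * nv x)"
        using \<phi>(2)[OF x] b0 mupos by (intro mult_left_mono) auto
      also have "\<dots> = r / \<mu> * nv x" unfolding r_def by simp
      finally show "nv (T *\<^sub>v x - T0 *\<^sub>v x) \<le> r / \<mu> * nv x" unfolding eq .
    qed
    note KT = K[OF cT mu1 Tclose]
    have Cbound: "nv (Cm *\<^sub>v z) \<le> (\<mu> * \<gamma> + Kf) * nv z" if z: "z \<in> carrier_vec n" for z
    proof -
      have "Cm *\<^sub>v z = (1\<^sub>m n - Fm) *\<^sub>v z - complex_of_real \<mu> \<cdot>\<^sub>v (Gm *\<^sub>v z)"
        unfolding Cz[OF z] using z cF cG by (intro eq_vecI) (auto simp: minus_mult_distrib_mat_vec[of _ n n])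
      then have "nv (Cm *\<^sub>v z) \<le> nv ((1\<^sub>m n - Fm) *\<^sub>v z) + nv (complex_of_real \<mu> \<cdot>\<^sub>v (Gm *\<^sub>v z))"
        using nv_minus[OF nv' mult_mat_vec_carrier[OF minus_carrier_mat[OF cF] z]
            smult_carrier_vec[THEN iffD2, OF mult_mat_vec_carrier[OF cG z]]] by simp
      also have "\<dots> \<le> Kf * nv z + \<mu> * (\<gamma> * nv z)"
        using Kf(2)[OF z] \<gamma>(2)[OF z] nv_scale[OF nv', of "Gm *\<^sub>v z"] z cG mupos
        by (intro add_mono) (auto intro: mult_left_mono)
      finally show ?thesis by (simp add: algebra_simps)
    qed
    have "induced_norm n nv (Cm * T ^\<^sub>m k) \<le> \<mu> * ((\<gamma> + 1) * X + c' / \<mu>)"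
    proof (rule ind_le[OF nv' n0])
      fix x :: "complex Matrix.vec" assume x: "x \<in> carrier_vec n" and x1: "nv x = 1"
      define u where "u = (T ^\<^sub>m k) *\<^sub>v x"
      define u0 where "u0 = (T0 ^\<^sub>m k) *\<^sub>v x"
      have u: "u \<in> carrier_vec n" "u0 \<in> carrier_vec n" unfolding u_def u0_def
        by (rule mult_mat_vec_carrier[OF pow_carrier_mat[OF cT] x], rule mult_mat_vec_carrier[OF pow_carrier_mat[OF cT0] x])
      have du: "nv (u - u0) \<le> K / \<mu>" using KT x x1 unfolding u_def u0_def by auto
      have nu0: "nv u0 \<le> X" using X(2)[OF x] x1 T0k unfolding u0_def by simp
      have "(Cm * T ^\<^sub>m k) *\<^sub>v x = Cm *\<^sub>v u0 + Cm *\<^sub>v (u - u0)"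
      proof -
        have "(Cm * T ^\<^sub>m k) *\<^sub>v x = Cm *\<^sub>v u" unfolding u_def by (rule assoc_mult_mat_vec[OF cC pow_carrier_mat[OF cT] x])
        moreover have "Cm *\<^sub>v (u - u0) = Cm *\<^sub>v u - Cm *\<^sub>v u0"
          using cC u by (simp add: mult_minus_distrib_mat_vec[of _ n n])
        ultimately show ?thesis using cC u by (intro eq_vecI) auto
      qed
      then have "nv ((Cm * T ^\<^sub>m k) *\<^sub>v x) \<le> nv (Cm *\<^sub>v u0) + nv (Cm *\<^sub>v (u - u0))"
        using cC u by (simp add: nv_tri[OF nv'])
      also have "\<dots> \<le> (\<mu> * \<gamma> + Kf) * X + (\<mu> * \<gamma> + Kf) * (K / \<mu>)"
      proof (rule add_mono)
        have cg: "\<mu> * \<gamma> + Kf \<ge> 0" using mupos \<gamma>(1) Kf(1) by simp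
        show "nv (Cm *\<^sub>v u0) \<le> (\<mu> * \<gamma> + Kf) * X"
          using order_trans[OF Cbound[OF u(2)] mult_left_mono[OF nu0 cg]] .
        have uu: "u - u0 \<in> carrier_vec n" using u by (rule minus_carrier_vec)
        show "nv (Cm *\<^sub>v (u - u0)) \<le> (\<mu> * \<gamma> + Kf) * (K / \<mu>)"
          using order_trans[OF Cbound[OF uu] mult_left_mono[OF du cg]] .
      qed
      also have "\<dots> = \<mu> * \<gamma> * X + (Kf * X + \<gamma> * K + Kf * K / \<mu>)"
        using mupos by (simp add: field_simps)
      also have "\<dots> \<le> \<mu> * ((\<gamma> + 1) * X) + c'"
      proof -
        have "Kf * K \<ge> 0" using Kf(1) K0 by simp
        then have "Kf * K / \<mu> \<le> Kf * K" using mu1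
          by (simp add: divide_le_eq mult_le_cancel_left1)
        moreover have "\<mu> * \<gamma> * X \<le> \<mu> * ((\<gamma> + 1) * X)" using mupos X(1) by (simp add: algebra_simps)
        ultimately show ?thesis unfolding c'_def by linarith
      qed
      also have "\<dots> = \<mu> * ((\<gamma> + 1) * X + c' / \<mu>)" using mupos by (simp add: field_simps)
      finally show "nv ((Cm * T ^\<^sub>m k) *\<^sub>v x) \<le> \<mu> * ((\<gamma> + 1) * X + c' / \<mu>)" .
    qed
    then show "induced_norm n nv ((1\<^sub>m n - complex_of_real \<mu> \<cdot>\<^sub>m Gm - Fm) *
        (1\<^sub>m n - inv_mat n (1\<^sub>m n - complex_of_real \<mu> \<cdot>\<^sub>m Bm) * (1\<^sub>m n - complex_of_real \<mu> \<cdot>\<^sub>m Gm - Fm)) ^\<^sub>m k)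
     \<le> \<mu> * ((\<gamma> + 1) * X + c' / \<mu>)"
      unfolding T_def Cm_def[symmetric] Pm_def[symmetric] invPm .
  qed
  have c'0: "c' \<ge> 0" unfolding c'_def using Kf X \<gamma> K0 by simp
  show "\<exists>c>0. \<exists>c'\<ge>0. \<exists>\<mu>s>0. \<forall>\<mu>::real. \<mu> \<ge> \<mu>s \<longrightarrow>
    (let Q = coll_mat M tau; Q\<Delta> = transpose_mat UQ;
         C = 1\<^sub>m (L*M*N) - complex_of_real \<mu> \<cdot>\<^sub>m kron (1\<^sub>m L) (kron (cmat Q) A)
             - kron (subdiag_ones L) (kron (last_col_ones M) (1\<^sub>m N));
         P = 1\<^sub>m (L*M*N) - complex_of_real \<mu> \<cdot>\<^sub>m kron (1\<^sub>m L) (kron (cmat Q\<Delta>) A)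
     in invertible_mat P \<longrightarrow>
        induced_norm (L*M*N) nv (C * (1\<^sub>m (L*M*N) - inv_mat (L*M*N) P * C) ^\<^sub>m k)
        \<le> \<mu> * (c * induced_norm (L*M*N) nv
                 (kron (1\<^sub>m L) (kron (cmat ((1\<^sub>m M - inv_mat M Q\<Delta> * Q) ^\<^sub>m k)) (1\<^sub>m N)))
               + c' / \<mu>))"
  proof -
    have g1: "0 < \<gamma> + 1" using \<gamma>(1) by simp
    have m1: "0 < max 1 (2 * \<beta>)" by simp
    show ?thesis
      apply (rule exI[of _ "\<gamma> + 1"], rule conjI[OF g1], rule exI[of _ c'], rule conjI[OF c'0],
          rule exI[of _ "max 1 (2 * \<beta>)"], rule conjI[OF m1])
      unfolding Let_def n_def[symmetric] Q_def[symmetric] Qd_def[symmetric] invQd R_def[symmetric]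
        Gm_def[symmetric] Bm_def[symmetric] Fm_def[symmetric] Xm_def[symmetric] X_def[symmetric]
      using main by assumption
  qed
qed


end
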